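(* Let $J=JCK(Z,\delta)$ and let $\mathcal K(J)=CK(Z,\delta)$ be its Tits-Kantor-Koecher Lie superalgebra. Then $\dim_{\mathbb F}\mathcal K(J)=4\dim_{\mathbb F}J=32\dim_{\mathbb F}Z$, and $\dim_{\mathbb F}\mathcal K(J)_{\bar0}=\dim_{\mathbb F}\mathcal K(J)_{\bar1}=4\dim_{\mathbb F}J_{\bar0}=4\dim_{\mathbb F}J_{\bar1}=16\dim_{\mathbb F}Z$ (dimensions as cardinals).
   Context: Let $\mathbb F$ be a field of characteristic $\neq 2$, $Z$ a unital commutative associative $\mathbb F$-algebra, and $\delta$ a derivation of $Z$ such that $Z\delta(Z)=Z$ (the $\mathbb F$-span of all products $f\delta(g)$, $f,g\in Z$, is $Z$). The Cheng-Kac Jordan superalgebra $J=JCK(Z,\delta)=J_{\bar0}\oplus J_{\bar1}$ is defined as follows: $J_{\bar0}=Z1\oplus Zw_1\oplus Zw_2\oplus Zw_3$ and $J_{\bar1}=Zx\oplus Zx_1\oplus Zx_2\oplus Zx_3$ are free $Z$-modules of rank 4; $J_{\bar0}$ is the $Z$-algebra $(\mathbb F1\oplus\mathbb Fw_1\oplus\mathbb Fw_2\oplus\mathbb Fw_3)\otimes_{\mathbb F}Z$ with $1$ the identity, $w_1^2=w_2^2=1$, $w_3^2=-1$, $w_iw_j=0$ for $i\ne j$. For $f,g\in Z$ and $i,j\in\{1,2,3\}$ the remaining products are: $f(gx)=(fg)x$, $f(gx_j)=(fg)x_j$, $(fw_i)(gx)=(\delta(f)g)x_i$, $(fw_i)(gx_j)=-(fg)x_{i\times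 j}$, $(fx)(gx)=\delta(f)g-f\delta(g)$, $(fx)(gx_j)=-(fg)w_j$, $(fx_i)(gx)=(fg)w_i$, $(fx_i)(gx_j)=0$, extended by supercommutativity ($ab=(-1)^{|a||b|}ba$), where $x_{1\times2}=-x_{2\times1}=x_3$, $x_{1\times3}=-x_{3\times1}=x_2$, $x_{3\times2}=-x_{2\times3}=x_1$, $x_{i\times i}=0$. $D(a,b)$ is $c\mapsto a(bc)-(-1)^{|a||b|}b(ac)$ and $\mathrm{Inder}(J)$ is their span. The Tits-Kantor-Koecher Lie superalgebra $\mathcal K(J)=\mathcal L_{-1}\oplus\mathcal L_0\oplus\mathcal L_1$: $\mathcal L_{\pm1}$ are copies of $J$ (element $a\in J$ written $a_{\pm1}$), $\mathcal L_0=L_J\oplus\mathrm{Inder}(J)\subseteq\mathfrak{gl}(J)$ where $L_a$ is left multiplication by $a$, with brackets $[a_1,b_{-1}]=L_{ab}+D(a,b)$, $[L_c,a_{\pm1}]=\pm(ca)_{\pm1}$, $[d,a_{\pm1}]=d(a)_{\pm1}$ for $d\in\mathrm{Inder}(J)$, $[a_1,b_1]=[a_{-1},b_{-1}]=0$, and $\mathcal L_0$ a subalgebra of $\mathfrak{gl}(J)$; parities are inherited from $J$ and $\mathfrak{gl}(J)$. *)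

theory Defs
  imports Main HOL.Vector_Spaces "HOL-Library.Function_Algebras" "HOL-Library.Product_Plus"
          "HOL-Library.Equipollence"
begin

text \<open>Index of the free Z-basis 1, w1, w2, w3 (even), x, x1, x2, x3 (odd).
  An element of J is a function from indices to Z (its coordinates).\<close>

datatype jidx = One | W1 | W2 | W3 | X | X1 | X2 | X3

definition jall :: "jidx list" where
  "jall = [One, W1, W2, W3, X, X1, X2, X3]"

fun jodd :: "jidx \<Rightarrow> bool" where
  "jodd One = False" | "jodd W1 = False" | "jodd W2 = False" | "jodd W3 = False"
| "jodd X = True" | "jodd X1 = True" | "jodd X2 = True" | "jodd X3 = True"

definition jsing :: "jidx \<Rightarrow> 'z::zero \<Rightarrow> jidx \<Rightarrow> 'z" where
  "jsing i z = (\<lambda>k. if k = i then z else 0)"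

text \<open>Product (f e_i)(g e_j) of two basis-coordinate elements, following the table
  (with x_{1x2}=x3, x_{2x1}=-x3, x_{1x3}=x2, x_{3x1}=-x2, x_{3x2}=x1, x_{2x3}=-x1),
  and the remaining products obtained by supercommutativity.\<close>
fun ckp :: "('z::comm_ring_1 \<Rightarrow> 'z) \<Rightarrow> jidx \<Rightarrow> jidx \<Rightarrow> 'z \<Rightarrow> 'z \<Rightarrow> jidx \<Rightarrow> 'z" where
  "ckp d One j f g = jsing j (f * g)"
| "ckp d i One f g = jsing i (f * g)"
| "ckp d W1 W1 f g = jsing One (f * g)"
| "ckp d W2 W2 f g = jsing One (f * g)"
| "ckp d W3 W3 f g = jsing One (- (f * g))"
| "ckp d W1 X f g = jsing X1 (d f * g)"
| "ckp d W2 X f g = jsing X2 (d f * g)"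
| "ckp d W3 X f g = jsing X3 (d f * g)"
| "ckp d X W1 f g = jsing X1 (d g * f)"
| "ckp d X W2 f g = jsing X2 (d g * f)"
| "ckp d X W3 f g = jsing X3 (d g * f)"
| "ckp d W1 X2 f g = jsing X3 (- (f * g))"
| "ckp d W2 X1 f g = jsing X3 (f * g)"
| "ckp d W1 X3 f g = jsing X2 (- (f * g))"
| "ckp d W3 X1 f g = jsing X2 (f * g)"
| "ckp d W3 X2 f g = jsing X1 (- (f * g))"
| "ckp d W2 X3 f g = jsing X1 (f * g)"
| "ckp d X2 W1 f g = jsing X3 (- (g * f))"
| "ckp d X1 W2 f g = jsing X3 (g * f)"
| "ckp d X3 W1 f g = jsing X2 (- (g * f))"
| "ckp d X1 W3 f g = jsing X2 (g * f)"
| "ckp d X2 W3 f g = jsing X1 (- (g * f))"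
| "ckp d X3 W2 f g = jsing X1 (g * f)"
| "ckp d X X f g = jsing One (d f * g - f * d g)"
| "ckp d X X1 f g = jsing W1 (- (f * g))"
| "ckp d X X2 f g = jsing W2 (- (f * g))"
| "ckp d X X3 f g = jsing W3 (- (f * g))"
| "ckp d X1 X f g = jsing W1 (f * g)"
| "ckp d X2 X f g = jsing W2 (f * g)"
| "ckp d X3 X f g = jsing W3 (f * g)"
| "ckp d i j f g = 0"

definition jmul :: "('z::comm_ring_1 \<Rightarrow> 'z) \<Rightarrow> (jidx \<Rightarrow> 'z) \<Rightarrow> (jidx \<Rightarrow> 'z) \<Rightarrow> (jidx \<Rightarrow> 'z)" where
  "jmul d a b = (\<Sum>i\<in>set jall. \<Sum>j\<in>set jall. ckp d i j (a i) (b j))"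

definition sJ :: "('f \<Rightarrow> 'z \<Rightarrow> 'z) \<Rightarrow> 'f \<Rightarrow> (jidx \<Rightarrow> 'z) \<Rightarrow> (jidx \<Rightarrow> 'z)" where
  "sJ smul c a = (\<lambda>i. smul c (a i))"

definition sG :: "('f \<Rightarrow> 'z \<Rightarrow> 'z) \<Rightarrow> 'f \<Rightarrow> ((jidx \<Rightarrow> 'z) \<Rightarrow> (jidx \<Rightarrow> 'z))
                  \<Rightarrow> ((jidx \<Rightarrow> 'z) \<Rightarrow> (jidx \<Rightarrow> 'z))" where
  "sG smul c \<phi> = (\<lambda>a. sJ smul c (\<phi> a))"

definition sK :: "('f \<Rightarrow> 'z \<Rightarrow> 'z) \<Rightarrow> 'f
     \<Rightarrow> (jidx \<Rightarrow> 'z) \<times> ((jidx \<Rightarrow> 'z) \<Rightarrow> (jidx \<Rightarrow> 'z)) \<times> (jidx \<Rightarrow> 'z)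
     \<Rightarrow> (jidx \<Rightarrow> 'z) \<times> ((jidx \<Rightarrow> 'z) \<Rightarrow> (jidx \<Rightarrow> 'z)) \<times> (jidx \<Rightarrow> 'z)" where
  "sK smul c v = (case v of (a, \<phi>, b) \<Rightarrow> (sJ smul c a, sG smul c \<phi>, sJ smul c b))"

definition jhom :: "bool \<Rightarrow> (jidx \<Rightarrow> 'z::zero) \<Rightarrow> bool" where
  "jhom p a \<longleftrightarrow> (\<forall>i. jodd i \<noteq> p \<longrightarrow> a i = 0)"

definition Jpart :: "bool \<Rightarrow> (jidx \<Rightarrow> 'z::zero) set" where
  "Jpart p = {a. jhom p a}"

definition glpart :: "bool \<Rightarrow> ((jidx \<Rightarrow> 'z::zero) \<Rightarrow> (jidx \<Rightarrow> 'z)) set" where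
  "glpart p = {\<phi>. \<forall>q a. jhom q a \<longrightarrow> jhom (q \<noteq> p) (\<phi> a)}"

definition Dop :: "('z::comm_ring_1 \<Rightarrow> 'z) \<Rightarrow> bool \<Rightarrow> (jidx \<Rightarrow> 'z) \<Rightarrow> (jidx \<Rightarrow> 'z)
                   \<Rightarrow> (jidx \<Rightarrow> 'z) \<Rightarrow> (jidx \<Rightarrow> 'z)" where
  "Dop d s a b = (\<lambda>c. jmul d a (jmul d b c)
                   - (if s then (-1) else 1) * jmul d b (jmul d a c))"

text \<open>L_0 = L_J + Inder(J), the F-span in gl(J) of all L_a and all D(a,b), a,b homogeneous.\<close>
definition L0 :: "('f::field \<Rightarrow> 'z::comm_ring_1 \<Rightarrow> 'z) \<Rightarrow> ('z \<Rightarrow> 'z)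
                  \<Rightarrow> ((jidx \<Rightarrow> 'z) \<Rightarrow> (jidx \<Rightarrow> 'z)) set" where
  "L0 smul d = Modules.module.span (sG smul)
     ({jmul d a | a. True} \<union> {Dop d (p \<and> q) a b | p q a b. jhom p a \<and> jhom q b})"

text \<open>K(J) = L_{-1} + L_0 + L_1, realised as J x L_0 x J; and its parity-p part.\<close>
definition KJ :: "('f::field \<Rightarrow> 'z::comm_ring_1 \<Rightarrow> 'z) \<Rightarrow> ('z \<Rightarrow> 'z)
     \<Rightarrow> ((jidx \<Rightarrow> 'z) \<times> ((jidx \<Rightarrow> 'z) \<Rightarrow> (jidx \<Rightarrow> 'z)) \<times> (jidx \<Rightarrow> 'z)) set" where
  "KJ smul d = UNIV \<times> L0 smul d \<times> UNIV"

definition KJpart :: "('f::field \<Rightarrow> 'z::comm_ring_1 \<Rightarrow> 'z) \<Rightarrow> ('z \<Rightarrow> 'z) \<Rightarrow> bool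
     \<Rightarrow> ((jidx \<Rightarrow> 'z) \<times> ((jidx \<Rightarrow> 'z) \<Rightarrow> (jidx \<Rightarrow> 'z)) \<times> (jidx \<Rightarrow> 'z)) set" where
  "KJpart smul d p = Jpart p \<times> (L0 smul d \<inter> glpart p) \<times> Jpart p"

definition is_basis :: "('f::field \<Rightarrow> 'v::ab_group_add \<Rightarrow> 'v) \<Rightarrow> 'v set \<Rightarrow> 'v set \<Rightarrow> bool" where
  "is_basis scale S B \<longleftrightarrow> B \<subseteq> S \<and> \<not> Modules.module.dependent scale B \<and> Modules.module.span scale B = S"

definition CK_hyp :: "('f::field \<Rightarrow> 'z::comm_ring_1 \<Rightarrow> 'z) \<Rightarrow> ('z \<Rightarrow> 'z) \<Rightarrow> bool" where
  "CK_hyp smul d \<longleftrightarrow>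
     (2::'f) \<noteq> 0 \<and> vector_space smul
     \<and> (\<forall>c x y. smul c (x * y) = smul c x * y)
     \<and> (\<forall>x y. d (x + y) = d x + d y) \<and> (\<forall>c x. d (smul c x) = smul c (d x))
     \<and> (\<forall>x y. d (x * y) = d x * y + x * d y)
     \<and> Modules.module.span smul {f * d g | f g. True} = UNIV"

end

theory Submission
  imports Defs
begin


definition jmulc :: "('z::comm_ring_1 \<Rightarrow> 'z) \<Rightarrow> (jidx \<Rightarrow> 'z) \<Rightarrow> (jidx \<Rightarrow> 'z) \<Rightarrow> (jidx \<Rightarrow> 'z)" where
"jmulc d a b = (\<lambda>k. case k of One \<Rightarrow> ((a One) * (b One)) + ((a W1) * (b W1)) + ((a W2) * (b W2)) - ((a W3) * (b W3)) - ((a X) * d (b X)) + (d (a X) * (b X))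
   | W1 \<Rightarrow> ((a One) * (b W1)) + ((a W1) * (b One)) - ((a X) * (b X1)) + ((a X1) * (b X))
   | W2 \<Rightarrow> ((a One) * (b W2)) + ((a W2) * (b One)) - ((a X) * (b X2)) + ((a X2) * (b X))
   | W3 \<Rightarrow> ((a One) * (b W3)) + ((a W3) * (b One)) - ((a X) * (b X3)) + ((a X3) * (b X))
   | X \<Rightarrow> ((a One) * (b X)) + ((a X) * (b One))
   | X1 \<Rightarrow> ((a One) * (b X1)) + (d (a W1) * (b X)) + ((a W2) * (b X3)) - ((a W3) * (b X2)) + ((a X) * d (b W1)) + ((a X1) * (b One)) - ((a X2) * (b W3)) + ((a X3) * (b W2))
   | X2 \<Rightarrow> ((a One) * (b X2)) - ((a W1) * (b X3)) + (d (a W2) * (b X)) + ((a W3) * (b X1)) + ((a X) * d (b W2)) + ((a X1) * (b W3)) + ((a X2) * (b One)) - ((a X3) * (b W1))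
   | X3 \<Rightarrow> ((a One) * (b X3)) - ((a W1) * (b X2)) + ((a W2) * (b X1)) + (d (a W3) * (b X)) + ((a X) * d (b W3)) + ((a X1) * (b W2)) - ((a X2) * (b W1)) + ((a X3) * (b One)))"

lemma jmul_eq: "jmul d a b = jmulc d a b"
  unfolding jmul_def jall_def jmulc_def fun_eq_iff
  apply (intro allI)
  subgoal for k by (cases k) (simp_all add: jsing_def algebra_simps)
  done

definition Rop :: "('z::comm_ring_1 \<Rightarrow> 'z) \<Rightarrow> (jidx \<Rightarrow> 'z) \<Rightarrow> (jidx \<Rightarrow> 'z) \<Rightarrow> (jidx \<Rightarrow> 'z)" where
"Rop d b c = (\<lambda>k. case k of One \<Rightarrow> - (2 * (b One) * d (c One)) + ((b X) * (c X)) - ((b X1) * (c X1)) - ((b X2) * (c X2)) + ((b X3) * (c X3))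
   | W1 \<Rightarrow> - (2 * (b One) * d (c W1)) - ((b W2) * (c W3)) + ((b W3) * (c W2)) - ((b X1) * d (c X)) + (d (b X1) * (c X)) + ((b X2) * (c X3)) - ((b X3) * (c X2))
   | W2 \<Rightarrow> - (2 * (b One) * d (c W2)) - ((b W1) * (c W3)) - ((b W3) * (c W1)) - ((b X1) * (c X3)) - ((b X2) * d (c X)) + (d (b X2) * (c X)) + ((b X3) * (c X1))
   | W3 \<Rightarrow> - (2 * (b One) * d (c W3)) - ((b W1) * (c W2)) - ((b W2) * (c W1)) - ((b X1) * (c X2)) + ((b X2) * (c X1)) - ((b X3) * d (c X)) + (d (b X3) * (c X))
   | X \<Rightarrow> - (2 * (b One) * d (c X)) + (d (b One) * (c X)) - ((b X1) * (c W1)) - ((b X2) * (c W2)) + ((b X3) * (c W3))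
   | X1 \<Rightarrow> - (2 * (b One) * d (c X1)) - (d (b One) * (c X1)) + (d (b W1) * (c X)) - ((b W2) * (c X3)) + ((b W3) * (c X2)) - ((b X) * (c W1)) - ((b X1) * d (c One)) + ((b X2) * d (c W3)) - ((b X3) * d (c W2))
   | X2 \<Rightarrow> - (2 * (b One) * d (c X2)) - (d (b One) * (c X2)) - ((b W1) * (c X3)) - (d (b W2) * (c X)) - ((b W3) * (c X1)) - ((b X) * (c W2)) - ((b X1) * d (c W3)) - ((b X2) * d (c One)) + ((b X3) * d (c W1))
   | X3 \<Rightarrow> - (2 * (b One) * d (c X3)) - (d (b One) * (c X3)) - ((b W1) * (c X2)) - ((b W2) * (c X1)) - (d (b W3) * (c X)) - ((b X) * (c W3)) - ((b X1) * d (c W2)) + ((b X2) * d (c W1)) - ((b X3) * d (c One)))"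

definition Phi :: "('z::comm_ring_1 \<Rightarrow> 'z) \<Rightarrow> (jidx \<Rightarrow> 'z) \<Rightarrow> (jidx \<Rightarrow> 'z) \<Rightarrow> (jidx \<Rightarrow> 'z)" where
"Phi d a b = (\<lambda>k. case k of One \<Rightarrow> a X * b X
   | W1 \<Rightarrow> a W2 * b W3 - a W3 * b W2 + (a X * b X1 + a X1 * b X)
   | W2 \<Rightarrow> a W1 * b W3 - a W3 * b W1 - (a X * b X2 + a X2 * b X)
   | W3 \<Rightarrow> a W1 * b W2 - a W2 * b W1 - (a X * b X3 + a X3 * b X)
   | X \<Rightarrow> d (a One) * b X - a X * d (b One) + (a W1 * b X1 - a X1 * b W1) + (a W2 * b X2 - a X2 * b W2) - (a W3 * b X3 - a X3 * b W3)
   | X1 \<Rightarrow> a W1 * b X - a X * b W1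
   | X2 \<Rightarrow> a W2 * b X - a X * b W2
   | X3 \<Rightarrow> a W3 * b X - a X * b W3)"

lemma all_jidx: "(\<forall>i. P i) \<longleftrightarrow> P One \<and> P W1 \<and> P W2 \<and> P W3 \<and> P X \<and> P X1 \<and> P X2 \<and> P X3"
  by (metis jidx.exhaust)

lemma jhom_F: "jhom False a \<longleftrightarrow> a X = 0 \<and> a X1 = 0 \<and> a X2 = 0 \<and> a X3 = 0"
  unfolding jhom_def all_jidx by simp
lemma jhom_T: "jhom True a \<longleftrightarrow> a One = 0 \<and> a W1 = 0 \<and> a W2 = 0 \<and> a W3 = 0"
  unfolding jhom_def all_jidx by simp

locale der =
  fixes d :: "'z::comm_ring_1 \<Rightarrow> 'z"
  assumes dadd: "d (x + y) = d x + d y" and dmul: "d (x * y) = d x * y + x * d y"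
begin
lemma d0[simp]: "d 0 = 0" using dadd[of 0 0] by simp
lemma dneg[simp]: "d (- x) = - d x" using dadd[of x "-x"] by (simp add: eq_neg_iff_add_eq_0 add.commute)
lemma ddiff[simp]: "d (x - y) = d x - d y" using dadd[of x "-y"] by simp
lemma d1[simp]: "d 1 = 0" using dmul[of 1 1] by simp
lemmas dsimps = dadd dmul

lemma Dop_Phi:
  assumes "jhom p a" "jhom q b"
  shows "Dop d (p \<and> q) a b = Rop d (Phi d a b)"
proof (rule ext, rule ext)
  fix c k
  show "Dop d (p \<and> q) a b c k = Rop d (Phi d a b) c k"
    using assms
    by (cases p; cases q; cases k) (simp_all add: Dop_def jmul_eq jmulc_def Rop_def Phi_def jhom_F jhom_T dsimps algebra_simps)
qed
end


definition pw :: "('f \<Rightarrow> 'v \<Rightarrow> 'v) \<Rightarrow> 'f \<Rightarrow> ('i \<Rightarrow> 'v) \<Rightarrow> ('i \<Rightarrow> 'v)" where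
  "pw s c f = (\<lambda>i. s c (f i))"

lemma vs_pw: "vector_space s \<Longrightarrow> vector_space (pw s)"
  unfolding vector_space_def pw_def by (auto simp: fun_eq_iff)

lemma sJ_pw: "sJ s = pw s" by (simp add: fun_eq_iff sJ_def pw_def)
lemma sG_pw: "sG s = pw (sJ s)" by (simp add: fun_eq_iff sG_def pw_def)

lemma vs_sK: "vector_space s \<Longrightarrow> vector_space (sK s)"
  unfolding vector_space_def sK_def sJ_def sG_def
  by (auto simp: fun_eq_iff split: prod.split)

locale ck = fixes smul :: "'f::field \<Rightarrow> 'z::comm_ring_1 \<Rightarrow> 'z" and d :: "'z \<Rightarrow> 'z"
  assumes hyp: "CK_hyp smul d"
begin
lemma vs: "vector_space smul" using hyp unfolding CK_hyp_def by blast
lemma smul_mult: "smul c (x * y) = smul c x * y" using hyp unfolding CK_hyp_def by blast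
lemma dsm: "d (smul c x) = smul c (d x)" using hyp unfolding CK_hyp_def by blast
lemma two: "(2::'f) \<noteq> 0" using hyp unfolding CK_hyp_def by blast
lemma spanZ: "Modules.module.span smul {f * d g | f g. True} = UNIV" using hyp unfolding CK_hyp_def by blast
sublocale der d using hyp unfolding CK_hyp_def der_def by blast
sublocale Z: vector_space smul by (rule vs)
sublocale J: vector_space "sJ smul" unfolding sJ_pw by (rule vs_pw[OF vs])
sublocale G: vector_space "sG smul" unfolding sG_pw sJ_pw by (rule vs_pw[OF vs_pw[OF vs]])
sublocale K: vector_space "sK smul" by (rule vs_sK[OF vs])

lemma smul_eq: "smul c x = smul c 1 * x" using smul_mult[of c 1 x] by simp
lemma dk: "d (smul c 1 * x) = smul c 1 * d x" "d (x * smul c 1) = smul c 1 * d x"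
  using dsm[of c x] smul_eq[of c x] smul_eq[of c "d x"] by (simp_all add: mult.commute)

lemma jmul_add1: "jmul d (a + a') b = jmul d a b + jmul d a' b"
  by (rule ext) (simp add: jmul_eq jmulc_def dadd algebra_simps split: jidx.split)
lemma smul_k: fixes c :: 'f obtains k where "\<And>x. smul c x = k * x" "\<And>x. d (k * x) = k * d x" "\<And>x. d (x * k) = k * d x"
  using smul_eq[where c=c] dk[where c=c] by blast

lemma jmul_smul1: "jmul d (sJ smul c a) b = sJ smul c (jmul d a b)"
proof -
  obtain k where k: "\<And>x. smul c x = k * x" "\<And>x. d (k * x) = k * d x" "\<And>x. d (x * k) = k * d x"
    using smul_k[where c=c] by blast
  show ?thesis
    by (rule ext) (simp add: jmul_eq jmulc_def sJ_def k algebra_simps split: jidx.split)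
qed
lemma jmul_smul1': "jmul d (sJ smul c a) = sG smul c (jmul d a)"
  by (rule ext) (simp add: jmul_smul1 sG_def)
lemma jmul_zero1: "jmul d 0 = 0"
  by (rule ext, rule ext) (simp add: jmul_eq jmulc_def split: jidx.split)
lemma jmul_add1': "jmul d (a + a') = jmul d a + jmul d a'"
  by (rule ext) (simp add: jmul_add1)
lemma jmul_diff1': "jmul d (a - a') = jmul d a - jmul d a'"
  using jmul_add1'[of "a - a'" a'] by simp

lemma Rop_add: "Rop d (b + b') = Rop d b + Rop d b'"
  by (rule ext, rule ext) (simp add: Rop_def dadd algebra_simps split: jidx.split)
lemma Rop_smul: "Rop d (sJ smul c b) = sG smul c (Rop d b)"
proof -
  obtain k where k: "\<And>x. smul c x = k * x" "\<And>x. d (k * x) = k * d x" "\<And>x. d (x * k) = k * d x"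
    using smul_k[where c=c] by blast
  show ?thesis
    by (rule ext, rule ext) (simp add: Rop_def sJ_def sG_def k algebra_simps split: jidx.split)
qed
lemma Rop_zero: "Rop d 0 = 0"
  by (rule ext, rule ext) (simp add: Rop_def split: jidx.split)
lemma Rop_diff: "Rop d (b - b') = Rop d b - Rop d b'"
  using Rop_add[of "b - b'" b'] by simp

lemma Phi_gen:
  "Phi d (jsing X u) (jsing X 1) = jsing One u"
  "Phi d (jsing W2 u) (jsing W3 1) = jsing W1 u"
  "Phi d (jsing W1 u) (jsing W3 1) = jsing W2 u"
  "Phi d (jsing W1 u) (jsing W2 1) = jsing W3 u"
  "Phi d (jsing W1 u) (jsing X1 1) = jsing X u"
  "Phi d (jsing W1 u) (jsing X 1) = jsing X1 u"
  "Phi d (jsing W2 u) (jsing X 1) = jsing X2 u"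
  "Phi d (jsing W3 u) (jsing X 1) = jsing X3 u"
  by (rule ext; simp add: Phi_def jsing_def split: jidx.split)+

lemma jhom_sing: "jhom (jodd i) (jsing i u)"
  by (cases i) (simp_all add: jhom_F jhom_T jsing_def)

lemma Rop_sing_gen:
  "Rop d (jsing One u) = Dop d (True \<and> True) (jsing X u) (jsing X 1)"
  "Rop d (jsing W1 u) = Dop d (False \<and> False) (jsing W2 u) (jsing W3 1)"
  "Rop d (jsing W2 u) = Dop d (False \<and> False) (jsing W1 u) (jsing W3 1)"
  "Rop d (jsing W3 u) = Dop d (False \<and> False) (jsing W1 u) (jsing W2 1)"
  "Rop d (jsing X u) = Dop d (False \<and> True) (jsing W1 u) (jsing X1 1)"
  "Rop d (jsing X1 u) = Dop d (False \<and> True) (jsing W1 u) (jsing X 1)"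
  "Rop d (jsing X2 u) = Dop d (False \<and> True) (jsing W2 u) (jsing X 1)"
  "Rop d (jsing X3 u) = Dop d (False \<and> True) (jsing W3 u) (jsing X 1)"
  by (subst Dop_Phi, (rule jhom_sing[where i=X, simplified] jhom_sing[where i=W1, simplified]
        jhom_sing[where i=W2, simplified] jhom_sing[where i=W3, simplified] jhom_sing[where i=X1, simplified])+,
      simp add: Phi_gen)+

lemma decomp: "(b::jidx\<Rightarrow>'z) = jsing One (b One) + jsing W1 (b W1) + jsing W2 (b W2) + jsing W3 (b W3)
   + jsing X (b X) + jsing X1 (b X1) + jsing X2 (b X2) + jsing X3 (b X3)"
proof (rule ext)
  fix k show "b k = (jsing One (b One) + jsing W1 (b W1) + jsing W2 (b W2) + jsing W3 (b W3)
   + jsing X (b X) + jsing X1 (b X1) + jsing X2 (b X2) + jsing X3 (b X3)) k"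
    by (cases k) (simp_all add: jsing_def)
qed

definition Tset where "Tset = {jmul d a + Rop d b | a b. True}"

lemma T_subspace: "G.subspace Tset"
proof (rule G.subspaceI)
  show "0 \<in> Tset" unfolding Tset_def
    by (rule CollectI, rule exI[of _ 0], rule exI[of _ 0]) (simp add: jmul_zero1 Rop_zero)
next
  fix x y assume "x \<in> Tset" "y \<in> Tset"
  then obtain a b a' b' where "x = jmul d a + Rop d b" "y = jmul d a' + Rop d b'"
    unfolding Tset_def by blast
  then have "x + y = jmul d (a + a') + Rop d (b + b')"
    by (simp add: jmul_add1' Rop_add algebra_simps)
  then show "x + y \<in> Tset" unfolding Tset_def by blast
next
  fix c x assume "x \<in> Tset"
  then obtain a b where "x = jmul d a + Rop d b" unfolding Tset_def by blast
  then have "sG smul c x = jmul d (sJ smul c a) + Rop d (sJ smul c b)"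
    by (simp add: jmul_smul1' Rop_smul G.scale_right_distrib)
  then show "sG smul c x \<in> Tset" unfolding Tset_def by blast
qed

lemma L0_eq: "L0 smul d = Tset"
proof
  show "L0 smul d \<subseteq> Tset"
    unfolding L0_def
  proof (rule G.span_minimal[OF _ T_subspace], safe)
    fix a show "jmul d a \<in> Tset" unfolding Tset_def
      by (rule CollectI, rule exI[of _ a], rule exI[of _ 0]) (simp add: Rop_zero)
  next
    fix p q and a b :: "jidx \<Rightarrow> 'z" assume "jhom p a" "jhom q b"
    then have "Dop d (p \<and> q) a b = jmul d 0 + Rop d (Phi d a b)"
      by (simp add: Dop_Phi jmul_zero1)
    then show "Dop d (p \<and> q) a b \<in> Tset" unfolding Tset_def by blast
  qed
next
  show "Tset \<subseteq> L0 smul d"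
  proof
    fix x assume "x \<in> Tset"
    then obtain a b where x: "x = jmul d a + Rop d b" unfolding Tset_def by blast
    let ?G = "{jmul d a | a. True} \<union> {Dop d (p \<and> q) a b | p q (a::jidx\<Rightarrow>'z) (b::jidx\<Rightarrow>'z). jhom p a \<and> jhom q b}"
    have D: "Dop d (p \<and> q) a b \<in> G.span ?G" if "jhom p a" "jhom q b" for p q and a b :: "jidx \<Rightarrow> 'z"
      by (rule G.span_base) (use that in blast)
    have R: "Rop d (jsing i u) \<in> G.span ?G" for i u
      by (cases i) (simp_all only: Rop_sing_gen, (rule D, (rule jhom_sing[where i=X, simplified] jhom_sing[where i=W1, simplified]
        jhom_sing[where i=W2, simplified] jhom_sing[where i=W3, simplified] jhom_sing[where i=X1, simplified])+)+)
    have "Rop d b \<in> G.span ?G"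
      by (subst decomp) (simp only: Rop_add, (rule G.span_add R)+)
    moreover have "jmul d a \<in> G.span ?G" by (rule G.span_base) blast
    ultimately show "x \<in> L0 smul d" unfolding x L0_def by (rule G.span_add[rotated])
  qed
qed

lemma ev:
  "(jmul d a + Rop d b) (jsing One 1) = a"
  "(jmul d a + Rop d b) (jsing W2 1) W3 = - b W1"
  "(jmul d a + Rop d b) (jsing W1 1) W3 = - b W2"
  "(jmul d a + Rop d b) (jsing W2 1) W1 = b W3"
  "(jmul d a + Rop d b) (jsing W1 1) X1 = - b X"
  "(jmul d a + Rop d b) (jsing W1 1) X = - b X1"
  "(jmul d a + Rop d b) (jsing W2 1) X = - b X2"
  "(jmul d a + Rop d b) (jsing W3 1) X = b X3"
  "(jmul d a + Rop d b) (jsing One h) One = a One * h - 2 * b One * d h"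
  by (rule ext, simp add: jmul_eq jmulc_def Rop_def jsing_def split: jidx.split)
     (simp_all add: jmul_eq jmulc_def Rop_def jsing_def)

lemma two_cancel:
  assumes h: "\<And>h. 2 * u * d h = 0"
  shows "u = 0"
proof -
  have 1: "u * d h = 0" for h
  proof -
    have "smul 2 (u * d h) = u * d h + u * d h"
      using Z.scale_left_distrib[of 1 1 "u * d h"] by (simp add: one_add_one)
    also have "\<dots> = 2 * u * d h" by (simp add: algebra_simps mult_2)
    finally have "smul 2 (u * d h) = 0" using h by simp
    then show ?thesis using two by simp
  qed
  have sub: "Z.subspace {v. u * v = 0}"
    by (rule Z.subspaceI) (auto simp: distrib_left, metis smul_mult mult.commute Z.scale_zero_right)
  have "{f * d g | f g. True} \<subseteq> {v. u * v = 0}"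
    using 1 by (auto simp: algebra_simps)
  from Z.span_minimal[OF this sub] spanZ have "1 \<in> {v. u * v = 0}" by blast
  then show ?thesis by simp
qed

lemma T_zero:
  assumes "jmul d a + Rop d b = 0"
  shows "a = 0 \<and> b = 0"
proof -
  have a: "a = 0" using ev(1)[of a b] assms by simp
  have b1: "b W1 = 0" "b W2 = 0" "b W3 = 0" "b X = 0" "b X1 = 0" "b X2 = 0" "b X3 = 0"
    using ev(2-8)[of a b] assms by simp_all
  have "2 * b One * d h = 0" for h
  proof -
    have "(jmul d a + Rop d b) (jsing One h) One = 0" using assms by simp
    then show ?thesis using ev(9)[of a b h] a by simp
  qed
  then have "b One = 0" by (rule two_cancel)
  with b1 have "b = 0" by (simp add: fun_eq_iff all_jidx)
  with a show ?thesis by simp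
qed

lemma jhom_add: "jhom p (a::jidx\<Rightarrow>'z::comm_ring_1) \<Longrightarrow> jhom p b \<Longrightarrow> jhom p (a + b)"
  by (simp add: jhom_def)

lemma glpart_I:
  assumes "jhom p a" "jhom p b"
  shows "jmul d a + Rop d b \<in> glpart p"
  unfolding glpart_def
proof (intro CollectI allI impI)
  fix q and c :: "jidx \<Rightarrow> 'z" assume "jhom q c"
  then show "jhom (q \<noteq> p) ((jmul d a + Rop d b) c)"
    using assms
    by (cases p; cases q) (simp_all add: jhom_F jhom_T jmul_eq jmulc_def Rop_def)
qed

lemma glpart_D:
  assumes "jmul d a + Rop d b \<in> glpart p"
  shows "jhom p a \<and> jhom p b"
proof -
  let ?f = "jmul d a + Rop d b"
  have H: "jhom (q \<noteq> p) (?f c)" if "jhom q c" for q c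
    using assms that unfolding glpart_def by blast
  have s: "jhom False (jsing i u)" if "i \<in> {One, W1, W2, W3}" for i and u :: 'z
    using that by (auto simp: jhom_F jsing_def)
  have a: "jhom p a" using H[OF s[of One 1]] ev(1)[of a b] by simp
  have b: "jhom p b"
  proof (cases p)
    case True
    have A: "jhom True (?f (jsing W2 1))" "jhom True (?f (jsing W1 1))" "jhom True (?f (jsing One h))" for h
      using H[OF s[of W2 1]] H[OF s[of W1 1]] H[OF s[of One h]] True by simp_all
    have "b W1 = 0" "b W3 = 0" "b W2 = 0"
      using A(1) A(2) ev(2)[of a b] ev(4)[of a b] ev(3)[of a b] unfolding jhom_T by simp_all
    moreover have "2 * b One * d h = 0" for h
      using A(3)[of h] ev(9)[of a b h] a True by (simp add: jhom_T)
    then have "b One = 0" by (rule two_cancel)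
    ultimately show ?thesis using True by (simp add: jhom_T)
  next
    case False
    have A: "jhom False (?f (jsing W1 1))" "jhom False (?f (jsing W2 1))" "jhom False (?f (jsing W3 1))"
      using H[OF s[of W2 1]] H[OF s[of W1 1]] H[OF s[of W3 1]] False by simp_all
    then show ?thesis using False ev(5-8)[of a b] by (simp add: jhom_F)
  qed
  from a b show ?thesis ..
qed
end



definition sng :: "'i \<Rightarrow> 'v::zero \<Rightarrow> 'i \<Rightarrow> 'v" where "sng i z = (\<lambda>k. if k = i then z else 0)"
definition Wsp :: "'i set \<Rightarrow> ('i \<Rightarrow> 'v::zero) set" where "Wsp I = {v. \<forall>i. i \<notin> I \<longrightarrow> v i = 0}"
definition Cset :: "'i set \<Rightarrow> 'v::zero set \<Rightarrow> ('i \<Rightarrow> 'v) set" where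
  "Cset I B = (\<lambda>(i,z). sng i z) ` (I \<times> B)"

lemma sum_fun_app: "(\<Sum>i\<in>I. f i) k = (\<Sum>i\<in>I. f i k)"
  by (induction I rule: infinite_finite_induct) auto

lemma basis_eqpoll:
  assumes "vector_space s" "\<not> Modules.module.dependent s C" "Modules.module.span s C = S"
    "is_basis s S B"
  shows "B \<approx> C"
proof -
  interpret vector_space s by fact
  show ?thesis
    using bij_if_span_eq_span_bases[of B C] assms unfolding is_basis_def eqpoll_def by auto
qed

lemma transport:
  fixes s1 :: "'f::field \<Rightarrow> 'a::ab_group_add \<Rightarrow> 'a" and s2 :: "'f \<Rightarrow> 'b::ab_group_add \<Rightarrow> 'b"
  assumes vs1: "vector_space s1" and vs2: "vector_space s2" and lin: "Vector_Spaces.linear s1 s2 f"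
    and ind: "\<not> Modules.module.dependent s1 C" and sp: "Modules.module.span s1 C = U"
    and inj: "inj_on f U" and B: "is_basis s2 (f ` U) B"
  shows "B \<approx> C"
proof -
  interpret vector_space_pair s1 s2 using vs1 vs2 by (simp add: vector_space_pair_def)
  have i2: "\<not> vs2.dependent (f ` C)"
    using linear_independent_injective_image[OF lin ind] inj sp by simp
  have s2: "vs2.span (f ` C) = f ` U"
    using linear_span_image[OF lin] sp by simp
  have "B \<approx> f ` C" by (rule basis_eqpoll[OF vs2 i2 s2 B])
  also have "f ` C \<approx> C"
    by (rule inj_on_image_eqpoll_self, rule inj_on_subset[OF inj])
      (use sp vs1.span_superset in blast)
  finally show ?thesis .
qed

lemma coord_basis:
  fixes s :: "'f::field \<Rightarrow> 'v::ab_group_add \<Rightarrow> 'v" and I :: "'i set"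
  assumes vs: "vector_space s" and BZ: "is_basis s UNIV BZ" and fin: "finite I"
  shows "\<not> Modules.module.dependent (pw s) (Cset I BZ)"
    "Modules.module.span (pw s) (Cset I BZ) = Wsp I"
    "Cset I BZ \<approx> I \<times> BZ"
proof -
  interpret Z: vector_space s by fact
  interpret V: vector_space "pw s :: 'f \<Rightarrow> ('i \<Rightarrow> 'v) \<Rightarrow> ('i \<Rightarrow> 'v)" by (rule vs_pw[OF vs])
  have indZ: "\<not> Z.dependent BZ" and spZ: "Z.span BZ = UNIV" using BZ unfolding is_basis_def by auto
  have z0: "0 \<notin> BZ" using indZ Z.dependent_zero by blast
  have lin: "Vector_Spaces.linear s (pw s :: 'f \<Rightarrow> ('i \<Rightarrow> 'v) \<Rightarrow> ('i \<Rightarrow> 'v)) (sng i)" for i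
    unfolding linear_iff using vs vs_pw[OF vs] by (auto simp: sng_def pw_def fun_eq_iff)
  interpret P: vector_space_pair s "pw s :: 'f \<Rightarrow> ('i \<Rightarrow> 'v) \<Rightarrow> ('i \<Rightarrow> 'v)"
    by (simp add: vector_space_pair_def vs vs_pw)
  show "\<not> V.dependent (Cset I BZ)"
  proof
    assume "V.dependent (Cset I BZ)"
    then obtain i z where iz: "i \<in> I" "z \<in> BZ" and
      sp: "sng i z \<in> V.span (Cset I BZ - {sng i z})"
      unfolding V.dependent_def Cset_def by auto
    let ?S = "{v :: 'i \<Rightarrow> 'v. v i \<in> Z.span (BZ - {z})}"
    have sub: "V.subspace ?S"
      by (rule V.subspaceI) (auto simp: pw_def intro: Z.span_add Z.span_scale Z.span_zero)
    have "Cset I BZ - {sng i z} \<subseteq> ?S"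
    proof
      fix v assume "v \<in> Cset I BZ - {sng i z}"
      then obtain j z' where v: "v = sng j z'" "z' \<in> BZ" "sng j z' \<noteq> sng i z"
        unfolding Cset_def by auto
      show "v \<in> ?S"
      proof (cases "j = i")
        case True
        then have "z' \<noteq> z" using v by auto
        then show ?thesis using v True by (auto simp: sng_def intro: Z.span_base)
      next
        case False
        then show ?thesis using v by (auto simp: sng_def Z.span_zero)
      qed
    qed
    from V.span_minimal[OF this sub] sp have "z \<in> Z.span (BZ - {z})" by (auto simp: sng_def)
    then show False using indZ iz unfolding Z.dependent_def by blast
  qed
  show "V.span (Cset I BZ) = Wsp I"
  proof
    have "V.subspace (Wsp I)"
      by (rule V.subspaceI) (auto simp: Wsp_def pw_def)
    moreover have "Cset I BZ \<subseteq> Wsp I" by (auto simp: Cset_def Wsp_def sng_def)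
    ultimately show "V.span (Cset I BZ) \<subseteq> Wsp I" by (simp add: V.span_minimal)
  next
    show "Wsp I \<subseteq> V.span (Cset I BZ)"
    proof
      fix v :: "'i \<Rightarrow> 'v" assume v: "v \<in> Wsp I"
      have eq: "v = (\<Sum>i\<in>I. sng i (v i))"
        using v fin by (auto simp: fun_eq_iff sum_fun_app sng_def Wsp_def)
      have "sng i (v i) \<in> V.span (Cset I BZ)" if "i \<in> I" for i
      proof -
        have "sng i (v i) \<in> sng i ` Z.span BZ" using spZ by auto
        also have "\<dots> = V.span (sng i ` BZ)" using P.linear_span_image[OF lin] by simp
        also have "\<dots> \<subseteq> V.span (Cset I BZ)"
          by (rule V.span_mono) (use that in \<open>auto simp: Cset_def\<close>)
        finally show ?thesis .
      qed
      then show "v \<in> V.span (Cset I BZ)" by (subst eq) (rule V.span_sum)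
    qed
  qed
  show "Cset I BZ \<approx> I \<times> BZ"
    unfolding Cset_def
  proof (rule inj_on_image_eqpoll_self, rule inj_onI, clarify)
    fix i z j z' assume "i \<in> I" "z \<in> BZ" "j \<in> I" "z' \<in> BZ" and e: "sng i z = sng j z'"
    have "sng i z i = sng j z' i" using e by simp
    then show "i = j \<and> z = z'" using z0 \<open>z \<in> BZ\<close> \<open>z' \<in> BZ\<close> by (auto simp: sng_def split: if_splits)
  qed
qed


definition Kmap :: "('z::comm_ring_1 \<Rightarrow> 'z) \<Rightarrow> (nat \<times> jidx \<Rightarrow> 'z)
   \<Rightarrow> (jidx \<Rightarrow> 'z) \<times> ((jidx \<Rightarrow> 'z) \<Rightarrow> (jidx \<Rightarrow> 'z)) \<times> (jidx \<Rightarrow> 'z)" where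
  "Kmap d v = (\<lambda>i. v (0,i), jmul d (\<lambda>i. v (1,i)) + Rop d (\<lambda>i. v (2,i)), \<lambda>i. v (3,i))"

lemma UNIV_jidx: "(UNIV :: jidx set) = {One,W1,W2,W3,X,X1,X2,X3}"
proof -
  have "x \<in> {One,W1,W2,W3,X,X1,X2,X3}" for x by (cases x) auto
  then show ?thesis by auto
qed
lemma jodd_set: "{i. jodd i = False} = {One,W1,W2,W3}" "{i. jodd i = True} = {X,X1,X2,X3}"
proof -
  have "jodd i = False \<longleftrightarrow> i \<in> {One,W1,W2,W3}" "jodd i = True \<longleftrightarrow> i \<in> {X,X1,X2,X3}" for i
    by (cases i; simp)+
  then show "{i. jodd i = False} = {One,W1,W2,W3}" "{i. jodd i = True} = {X,X1,X2,X3}" by blast+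
qed

lemma fin_times: "finite I \<Longrightarrow> card I = n \<Longrightarrow> I \<times> B \<approx> {..<n} \<times> B"
  by (rule times_eqpoll_cong) (auto simp: eqpoll_iff_finite_card)

lemma Jpart_Wsp: "Jpart p = Wsp {i. jodd i = p}"
  by (auto simp: Jpart_def Wsp_def jhom_def)

context ck begin

lemma Kmap_lin: "Vector_Spaces.linear (pw smul) (sK smul) (Kmap d)"
  unfolding linear_iff
proof (intro conjI allI)
  show "vector_space (pw smul :: 'f \<Rightarrow> (nat \<times> jidx \<Rightarrow> 'z) \<Rightarrow> _)" by (rule vs_pw[OF vs])
  show "vector_space (sK smul)" by (rule vs_sK[OF vs])
next
  fix v w :: "nat \<times> jidx \<Rightarrow> 'z"
  have e: "(\<lambda>i. v (k,i) + w (k,i)) = (\<lambda>i. v (k,i)) + (\<lambda>i. w (k,i))" for k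
    by (simp add: fun_eq_iff)
  show "Kmap d (v + w) = Kmap d v + Kmap d w"
    by (simp add: Kmap_def e jmul_add1' Rop_add algebra_simps plus_prod_def)
next
  fix c and v :: "nat \<times> jidx \<Rightarrow> 'z"
  have e: "(\<lambda>i. smul c (v (k,i))) = sJ smul c (\<lambda>i. v (k,i))" for k
    by (simp add: fun_eq_iff sJ_def)
  show "Kmap d (pw smul c v) = sK smul c (Kmap d v)"
    by (simp add: Kmap_def pw_def e jmul_smul1' Rop_smul G.scale_right_distrib sK_def)
qed

lemma Kmap_inj: "I \<subseteq> {..<4} \<times> UNIV \<Longrightarrow> inj_on (Kmap d) (Wsp I)"
proof (rule inj_onI)
  fix v w assume I: "I \<subseteq> {..<4} \<times> UNIV" and v: "v \<in> Wsp I" and w: "w \<in> Wsp I"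
    and e: "Kmap d v = Kmap d w"
  have c: "(\<lambda>i. v (0,i)) = (\<lambda>i. w (0,i))" "(\<lambda>i. v (3,i)) = (\<lambda>i. w (3,i))"
    "jmul d (\<lambda>i. v (1,i)) + Rop d (\<lambda>i. v (2,i)) = jmul d (\<lambda>i. w (1,i)) + Rop d (\<lambda>i. w (2,i))"
    using e unfolding Kmap_def by simp_all
  have 0: "v (0,i) = w (0,i)" "v (3,i) = w (3,i)" for i
    using fun_cong[OF c(1), of i] fun_cong[OF c(2), of i] by simp_all
  have "jmul d ((\<lambda>i. v (1,i)) - (\<lambda>i. w (1,i))) + Rop d ((\<lambda>i. v (2,i)) - (\<lambda>i. w (2,i)))
     = (jmul d (\<lambda>i. v (1,i)) + Rop d (\<lambda>i. v (2,i))) - (jmul d (\<lambda>i. w (1,i)) + Rop d (\<lambda>i. w (2,i)))"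
    unfolding jmul_diff1' Rop_diff by (simp add: algebra_simps)
  also have "\<dots> = 0" using c(3) by simp
  finally have z: "jmul d ((\<lambda>i. v (1,i)) - (\<lambda>i. w (1,i))) + Rop d ((\<lambda>i. v (2,i)) - (\<lambda>i. w (2,i))) = 0" .
  from T_zero[OF z] have 1: "v (1,i) = w (1,i)" "v (2,i) = w (2,i)" for i
    by (simp_all add: fun_eq_iff)
  show "v = w"
  proof (rule ext, clarify)
    fix k i
    show "v (k,i) = w (k,i)"
    proof (cases "k < 4")
      case True
      then have "k = 0 \<or> k = 1 \<or> k = 2 \<or> k = 3" by auto
      then show ?thesis using 0 1 by auto
    next
      case False
      then have "(k,i) \<notin> I" using I by auto
      then show ?thesis using v w by (simp add: Wsp_def)
    qed
  qed
qed

lemma Kmap_image: "Kmap d ` Wsp ({..<4} \<times> {i. jodd i = p}) = KJpart smul d p"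
  and Kmap_image_all: "Kmap d ` Wsp ({..<4} \<times> UNIV) = KJ smul d"
proof -
  { fix J :: "jidx set" and S :: "((jidx \<Rightarrow> 'z) \<Rightarrow> (jidx \<Rightarrow> 'z)) set"
    assume S: "\<And>a b. jmul d a + Rop d b \<in> S \<longleftrightarrow> a \<in> Wsp J \<and> b \<in> Wsp J"
       and SS: "S \<subseteq> Tset"
    have "Kmap d ` Wsp ({..<4} \<times> J) = Wsp J \<times> S \<times> Wsp J"
    proof
      show "Kmap d ` Wsp ({..<4} \<times> J) \<subseteq> Wsp J \<times> S \<times> Wsp J"
      proof (rule image_subsetI)
        fix v :: "nat \<times> jidx \<Rightarrow> 'z" assume v: "v \<in> Wsp ({..<4} \<times> J)"
        have w: "(\<lambda>i. v (k,i)) \<in> Wsp J" if "k < 4" for k using v that by (auto simp: Wsp_def)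
        show "Kmap d v \<in> Wsp J \<times> S \<times> Wsp J"
          unfolding Kmap_def using w[of 0] w[of 1] w[of 2] w[of 3] S by simp
      qed
    next
      show "Wsp J \<times> S \<times> Wsp J \<subseteq> Kmap d ` Wsp ({..<4} \<times> J)"
      proof (rule subsetI)
        fix t :: "(jidx \<Rightarrow> 'z) \<times> ((jidx \<Rightarrow> 'z) \<Rightarrow> (jidx \<Rightarrow> 'z)) \<times> (jidx \<Rightarrow> 'z)"
        assume "t \<in> Wsp J \<times> S \<times> Wsp J"
        then obtain x \<phi> y where t: "t = (x, \<phi>, y)" and x: "x \<in> Wsp J" and y: "y \<in> Wsp J" and ph: "\<phi> \<in> S"
          by auto
        then obtain a b where ab: "\<phi> = jmul d a + Rop d b" using SS unfolding Tset_def by blast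
        then have abW: "a \<in> Wsp J" "b \<in> Wsp J" using S ph by auto
        define v :: "nat \<times> jidx \<Rightarrow> 'z" where "v = (\<lambda>(k,i). if k = 0 then x i else if k = 1 then a i else if k = 2 then b i
           else if k = 3 then y i else 0)"
        have "v \<in> Wsp ({..<4} \<times> J)" using x y abW by (auto simp: v_def Wsp_def)
        moreover have "Kmap d v = (x, \<phi>, y)" by (simp add: Kmap_def v_def ab)
        ultimately show "t \<in> Kmap d ` Wsp ({..<4} \<times> J)" unfolding t by (metis image_eqI)
      qed
    qed
  } note gen = this
  have "Kmap d ` Wsp ({..<4} \<times> {i. jodd i = p}) = Wsp {i. jodd i = p} \<times> (L0 smul d \<inter> glpart p) \<times> Wsp {i. jodd i = p}"
  proof (rule gen)
    have jw: "jhom p a \<longleftrightarrow> a \<in> Wsp {i. jodd i = p}" for a :: "jidx \<Rightarrow> 'z"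
      by (simp add: Wsp_def jhom_def)
    fix a b :: "jidx \<Rightarrow> 'z"
    show "jmul d a + Rop d b \<in> L0 smul d \<inter> glpart p \<longleftrightarrow> a \<in> Wsp {i. jodd i = p} \<and> b \<in> Wsp {i. jodd i = p}"
      unfolding L0_eq Tset_def jw[symmetric] using glpart_I glpart_D by blast
  next
    show "L0 smul d \<inter> glpart p \<subseteq> Tset" by (simp add: L0_eq)
  qed
  then show "Kmap d ` Wsp ({..<4} \<times> {i. jodd i = p}) = KJpart smul d p"
    by (simp add: KJpart_def Jpart_Wsp)
  have "Wsp (UNIV :: jidx set) = (UNIV :: (jidx \<Rightarrow> 'z) set)" by (simp add: Wsp_def)
  moreover have "Kmap d ` Wsp ({..<4} \<times> UNIV) = Wsp UNIV \<times> L0 smul d \<times> Wsp UNIV"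
    by (rule gen) (auto simp: L0_eq Tset_def Wsp_def)
  ultimately show "Kmap d ` Wsp ({..<4} \<times> UNIV) = KJ smul d"
    by (simp add: KJ_def)
qed

end



lemma eq_help1: "A \<approx> I \<times> B \<Longrightarrow> finite I \<Longrightarrow> card I = k \<Longrightarrow> k * m = n \<Longrightarrow> {..<m} \<times> A \<approx> {..<n} \<times> B"
proof -
  assume A: "A \<approx> I \<times> B" and f: "finite I" "card I = k" "k * m = n"
  have "{..<m} \<times> A \<approx> {..<m} \<times> (I \<times> B)" by (rule times_eqpoll_cong[OF eqpoll_refl A])
  also have "\<dots> \<approx> ({..<m} \<times> I) \<times> B" by (rule eqpoll_sym[OF times_assoc_eqpoll])
  also have "\<dots> \<approx> {..<n} \<times> B"
    by (rule fin_times) (use f in \<open>auto simp: card_cartesian_product\<close>)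
  finally show ?thesis .
qed

lemma eq_help2: "A \<approx> J \<times> B \<Longrightarrow> finite J \<Longrightarrow> card J = n \<Longrightarrow> A \<approx> {..<n} \<times> B"
  using eqpoll_trans fin_times by blast

theorem corollary4p6:
  fixes smul :: "'f::field \<Rightarrow> 'z::comm_ring_1 \<Rightarrow> 'z" and d :: "'z \<Rightarrow> 'z"
  assumes "CK_hyp smul d"
    and "is_basis smul UNIV BZ"
    and "is_basis (sJ smul) UNIV BJ"
    and "is_basis (sJ smul) (Jpart False) BJ0"
    and "is_basis (sJ smul) (Jpart True) BJ1"
    and "is_basis (sK smul) (KJ smul d) BK"
    and "is_basis (sK smul) (KJpart smul d False) BK0"
    and "is_basis (sK smul) (KJpart smul d True) BK1"
  shows "BK \<approx> {..<(4::nat)} \<times> BJ \<and> {..<(4::nat)} \<times> BJ \<approx> {..<(32::nat)} \<times> BZ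
       \<and> BK0 \<approx> BK1 \<and> BK1 \<approx> {..<(4::nat)} \<times> BJ0 \<and> {..<(4::nat)} \<times> BJ0 \<approx> {..<(4::nat)} \<times> BJ1
       \<and> {..<(4::nat)} \<times> BJ1 \<approx> {..<(16::nat)} \<times> BZ"
proof -
  interpret ck smul d using assms(1) by (simp add: ck_def)
  have vsJ: "vector_space (pw smul :: 'f \<Rightarrow> (jidx \<Rightarrow> 'z) \<Rightarrow> _)" by (rule vs_pw[OF vs])
  have vsN: "vector_space (pw smul :: 'f \<Rightarrow> (nat \<times> jidx \<Rightarrow> 'z) \<Rightarrow> _)" by (rule vs_pw[OF vs])
  have finU: "finite (UNIV :: jidx set)" by (simp add: UNIV_jidx)
  have cU: "card (UNIV :: jidx set) = 8" by (simp add: UNIV_jidx)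
  have finP: "finite {i. jodd i = p}" for p by (rule finite_subset[OF _ finU]) simp
  have cP: "card {i. jodd i = p} = 4" for p by (cases p) (simp_all add: jodd_set[simplified])
  note cb = coord_basis[OF vs assms(2)]
  have BJ: "BJ \<approx> (UNIV :: jidx set) \<times> BZ"
  proof -
    have "BJ \<approx> Cset (UNIV :: jidx set) BZ"
      by (rule basis_eqpoll[OF vsJ cb(1)[OF finU]]) (use cb(2)[OF finU] assms(3) in \<open>simp_all add: sJ_pw Wsp_def\<close>)
    then show ?thesis using cb(3)[OF finU] eqpoll_trans by blast
  qed
  have BJp: "B \<approx> {i. jodd i = p} \<times> BZ" if "is_basis (sJ smul) (Jpart p) B" for p B
  proof -
    have "B \<approx> Cset {i. jodd i = p} BZ"
      by (rule basis_eqpoll[OF vsJ cb(1)[OF finP]]) (use cb(2)[OF finP] that in \<open>simp_all add: sJ_pw Jpart_Wsp\<close>)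
    then show ?thesis using cb(3)[OF finP] eqpoll_trans by blast
  qed
  have fin4U: "finite ({..<4::nat} \<times> (UNIV :: jidx set))" using finU by simp
  have fin4P: "finite ({..<4::nat} \<times> {i. jodd i = p})" for p using finP by simp
  have BK: "BK \<approx> ({..<4::nat} \<times> (UNIV :: jidx set)) \<times> BZ"
  proof -
    have "BK \<approx> Cset ({..<4::nat} \<times> (UNIV :: jidx set)) BZ"
      by (rule transport[OF vsN vs_sK[OF vs] Kmap_lin cb(1)[OF fin4U] cb(2)[OF fin4U] Kmap_inj])
         (use assms(6) Kmap_image_all in auto)
    then show ?thesis using cb(3)[OF fin4U] eqpoll_trans by blast
  qed
  have BKp: "B \<approx> ({..<4::nat} \<times> {i. jodd i = p}) \<times> BZ" if "is_basis (sK smul) (KJpart smul d p) B" for p B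
  proof -
    have "B \<approx> Cset ({..<4::nat} \<times> {i. jodd i = p}) BZ"
      by (rule transport[OF vsN vs_sK[OF vs] Kmap_lin cb(1)[OF fin4P] cb(2)[OF fin4P] Kmap_inj])
         (use that Kmap_image in auto)
    then show ?thesis using cb(3)[OF fin4P] eqpoll_trans by blast
  qed
  have e1: "BK \<approx> {..<32::nat} \<times> BZ"
    by (rule eq_help2[OF BK fin4U]) (simp add: card_cartesian_product cU)
  have e2: "{..<4::nat} \<times> BJ \<approx> {..<32::nat} \<times> BZ"
    by (rule eq_help1[OF BJ finU cU]) simp
  have c16: "card ({..<4::nat} \<times> {i. jodd i = p}) = 16" for p
    using cP[of p] by (simp add: card_cartesian_product)
  have e3: "BK0 \<approx> {..<16::nat} \<times> BZ" "BK1 \<approx> {..<16::nat} \<times> BZ"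
    using eq_help2[OF BKp[OF assms(7)] fin4P c16] eq_help2[OF BKp[OF assms(8)] fin4P c16] by auto
  have e4: "{..<4::nat} \<times> BJ0 \<approx> {..<16::nat} \<times> BZ" "{..<4::nat} \<times> BJ1 \<approx> {..<16::nat} \<times> BZ"
    by (rule eq_help1[OF BJp[OF assms(4)] finP cP], simp)
       (rule eq_help1[OF BJp[OF assms(5)] finP cP], simp)
  show ?thesis
    using eqpoll_trans[OF e1 eqpoll_sym[OF e2]] e2 eqpoll_trans[OF e3(1) eqpoll_sym[OF e3(2)]]
      eqpoll_trans[OF e3(2) eqpoll_sym[OF e4(1)]] eqpoll_trans[OF e4(1) eqpoll_sym[OF e4(2)]] e4(2)
    by blast
qed

end
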